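(* Let $s\in[1/4,3/4]$, $\rho\ge2^{40}$, and let $g:(0,\infty)\to(0,\infty)$ be defined by $g(r):=\int_0^rg'(x)\,dx$, where $g'(r)=s\,r^{s-1}-s\rho^{s-1}$ for $r\in(0,\rho]$ and $g'(r)=0$ for $r\ge\rho$. Let $\lambda:[0,T]\to[0,1]$ be any function and define, for $v\in\mathbb{Z}\times\mathbb{R}$, $$B(t,v):=\langle v\rangle^3\exp[\lambda(t)g(\langle v\rangle)].$$ Then for all $t$ and $v,w\in\mathbb{Z}\times\mathbb{R}$, $$B(t,v+w)\lesssim B(t,v)B(t,w)\min(\langle v\rangle,\langle w\rangle)^{-3}.$$ Moreover, if $|v|\le|w|$ and $|w-v|\le|v|/4$, then $$|B(t,w)-B(t,v)|\lesssim[1+\lambda(t)g(\langle v\rangle)]\langle v\rangle^{-1}B(t,v)\cdot B(t,v-w)\langle v-w\rangle^{-2}.$$ The implicit constants are independent of $t$, $\lambda$, $s$, and $\rho$.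
   Context: $\langle v\rangle=(1+|v|^2)^{1/2}$ with $|v|$ the Euclidean norm of $v=(k,\xi)\in\mathbb{Z}\times\mathbb{R}\subset\mathbb{R}^2$. *)

theory Defs
  imports "HOL-Analysis.Analysis"
begin

definition vnorm :: "int \<times> real \<Rightarrow> real" where
  "vnorm v = sqrt ((real_of_int (fst v))\<^sup>2 + (snd v)\<^sup>2)"

definition jbr :: "int \<times> real \<Rightarrow> real" where
  "jbr v = sqrt (1 + (vnorm v)\<^sup>2)"

definition gder :: "real \<Rightarrow> real \<Rightarrow> real \<Rightarrow> real" where
  "gder s \<rho> r = (if r \<le> \<rho> then s * r powr (s - 1) - s * \<rho> powr (s - 1) else 0)"

definition gfun :: "real \<Rightarrow> real \<Rightarrow> real \<Rightarrow> real" where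
  "gfun s \<rho> r = integral {0..r} (gder s \<rho>)"

text \<open>B(t,v) with lam standing for the value lambda(t).\<close>
definition Bw :: "real \<Rightarrow> real \<Rightarrow> real \<Rightarrow> int \<times> real \<Rightarrow> real" where
  "Bw s \<rho> lam v = (jbr v) ^ 3 * exp (lam * gfun s \<rho> (jbr v))"

end

theory Submission
  imports Defs
begin

lemma gder_int:
  assumes s: "0 < s" "s < 1" and rho: "0 < \<rho>" and r: "0 \<le> r"
  shows "gder s \<rho> integrable_on {0..r}"
proof -
  have h: "(\<lambda>x. s * x powr (s - 1) - s * \<rho> powr (s - 1)) integrable_on {0..min \<rho> r}"
  proof -
    have "(\<lambda>x. x powr (s - 1)) integrable_on {0..min \<rho> r}"
      using has_integral_powr_from_0[of "s-1" "min \<rho> r"] s rho r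
      unfolding integrable_on_def by auto
    then have "(\<lambda>x. s * x powr (s - 1)) integrable_on {0..min \<rho> r}"
      using integrable_on_mult_right by blast
    then show ?thesis by (intro integrable_diff integrable_const_ivl)
  qed
  have eq: "{0..\<rho>} \<inter> {0..r} = {0..min \<rho> r}" by auto
  have "(\<lambda>x. if x \<in> {0..\<rho>} then s * x powr (s - 1) - s * \<rho> powr (s - 1) else 0) integrable_on {0..r}"
    using h eq integrable_restrict_Int by metis
  moreover have "\<And>x. x \<in> {0..r} \<Longrightarrow> (if x \<in> {0..\<rho>} then s * x powr (s - 1) - s * \<rho> powr (s - 1) else 0) = gder s \<rho> x"
    by (auto simp: gder_def)
  ultimately show ?thesis by (rule integrable_eq)
qed

lemma gder_antimono:
  assumes s: "0 < s" "s < 1" and rho: "0 < \<rho>" and "0 < a" "a \<le> b"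
  shows "gder s \<rho> b \<le> gder s \<rho> a"
proof -
  have "b powr (s-1) \<le> a powr (s-1)" using assms by (intro powr_mono2') auto
  moreover have "a \<le> \<rho> \<Longrightarrow> \<rho> powr (s-1) \<le> a powr (s-1)" using assms by (intro powr_mono2') auto
  ultimately show ?thesis using assms by (auto simp: gder_def)
qed

lemma gder_nonneg:
  assumes s: "0 < s" "s < 1" and rho: "0 < \<rho>" and "0 < a"
  shows "0 \<le> gder s \<rho> a"
proof -
  have "a \<le> \<rho> \<Longrightarrow> \<rho> powr (s-1) \<le> a powr (s-1)" using assms by (intro powr_mono2') auto
  then show ?thesis using assms by (auto simp: gder_def)
qed


locale gctx =
  fixes s \<rho> :: real
  assumes s0: "0 < s" and s1: "s < 1" and rho: "0 < \<rho>"
begin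

abbreviation "g \<equiv> gfun s \<rho>"
abbreviation "g' \<equiv> gder s \<rho>"

lemma int: "0 \<le> r \<Longrightarrow> g' integrable_on {0..r}"
  using gder_int s0 s1 rho by blast

lemma g0: "g 0 = 0"
  by (simp add: gfun_def)

lemma gdiff: assumes "0 \<le> a" "a \<le> b" shows "g b - g a = integral {a..b} g'"
  using Henstock_Kurzweil_Integration.integral_combine[OF assms int[of b]] assms unfolding gfun_def by simp

lemma intab: assumes "0 \<le> a" "a \<le> b" shows "g' integrable_on {a..b}"
  using integrable_subinterval_real[OF int[of b]] assms by auto

lemma gincr: assumes "0 < a" "a \<le> b" shows "0 \<le> g b - g a" "g b - g a \<le> (b - a) * g' a"
proof -
  have "0 \<le> integral {a..b} g'"
    using intab[of a b] assms gder_nonneg[OF s0 s1 rho] by (intro integral_nonneg) auto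
  then show "0 \<le> g b - g a" using gdiff assms by simp
  have "integral {a..b} g' \<le> integral {a..b} (\<lambda>x. g' a)"
    using intab[of a b] assms gder_antimono[OF s0 s1 rho, of a] by (intro integral_le) auto
  then show "g b - g a \<le> (b - a) * g' a" using gdiff assms by simp
qed

lemma glow: assumes "0 < a" shows "a * g' a \<le> g a"
proof -
  define h where "h x = (if x = 0 then g' a else g' x)" for x
  have "g a = integral {0..a} h"
    unfolding gfun_def h_def by (rule integral_spike[of "{0}"]) auto
  moreover have "h integrable_on {0..a}"
  proof (rule integrable_spike_finite[of "{0}"])
    show "g' integrable_on {0..a}" using int[of a] assms by simp
  qed (auto simp: h_def)
  moreover have "integral {0..a} (\<lambda>x. g' a) \<le> integral {0..a} h"
    using calculation assms gder_antimono[OF s0 s1 rho, of _ a] unfolding h_def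
    by (intro integral_le) auto
  ultimately show ?thesis using assms by simp
qed

lemma gnonneg: assumes "0 \<le> a" shows "0 \<le> g a"
proof (cases "a = 0")
  case True then show ?thesis by (simp add: g0)
next
  case False
  then have "0 \<le> a * g' a" using assms gder_nonneg[OF s0 s1 rho, of a] by simp
  then show ?thesis using glow[of a] assms False by linarith
qed

lemma gmono: assumes "0 \<le> a" "a \<le> b" shows "g a \<le> g b"
proof (cases "a = 0")
  case True then show ?thesis using gnonneg[of b] assms by (simp add: g0)
next
  case False then show ?thesis using gincr(1)[of a b] assms by simp
qed

lemma gsub_aux: assumes "0 < a" "0 < c" "c \<le> a" shows "g (a + c) \<le> g a + g c"
proof -
  have "g (a + c) - g a \<le> c * g' a" using gincr(2)[of a "a+c"] assms by simp
  also have "\<dots> \<le> c * g' c" using gder_antimono[OF s0 s1 rho, of c a] assms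
    by (intro mult_left_mono) auto
  also have "\<dots> \<le> g c" using glow[of c] assms by simp
  finally show ?thesis by simp
qed

lemma gsub: assumes "0 \<le> a" "0 \<le> c" shows "g (a + c) \<le> g a + g c"
proof -
  consider "a = 0" | "c = 0" | "0 < a" "0 < c" "c \<le> a" | "0 < a" "0 < c" "a \<le> c"
    using assms by linarith
  then show ?thesis
  proof cases
    case 1 then show ?thesis by (simp add: g0)
  next
    case 2 then show ?thesis by (simp add: g0)
  next
    case 3 then show ?thesis by (rule gsub_aux)
  next
    case 4 then show ?thesis using gsub_aux[of c a] by (simp add: add.commute)
  qed
qed

end


definition phi :: "int \<times> real \<Rightarrow> real \<times> real" where
  "phi v = (real_of_int (fst v), snd v)"

lemma vnorm_phi: "vnorm v = norm (phi v)"
  by (simp add: vnorm_def phi_def norm_prod_def)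

lemma jbr_phi: "jbr v = norm ((1::real), phi v)"
  by (simp add: jbr_def vnorm_phi norm_prod_def)

lemma phi_add: "phi (v + w) = phi v + phi w"
  by (simp add: phi_def)

lemma phi_diff: "phi (v - w) = phi v - phi w"
  by (simp add: phi_def)

lemma jbr_ge1: "1 \<le> jbr v"
  by (simp add: jbr_def)

lemma vnorm_le_jbr: "vnorm v \<le> jbr v"
  unfolding jbr_def by (rule real_le_rsqrt) simp

lemma jbr_add: "jbr (v + w) \<le> jbr v + vnorm w"
proof -
  have "((1::real), phi (v + w)) = (1, phi v) + (0, phi w)" by (simp add: phi_add)
  then have "jbr (v + w) = norm (((1::real), phi v) + (0, phi w))" by (simp add: jbr_phi)
  also have "\<dots> \<le> norm ((1::real), phi v) + norm ((0::real), phi w)" by (rule norm_triangle_ineq)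
  finally show ?thesis by (simp add: jbr_phi vnorm_phi norm_prod_def)
qed

lemma jbr_lip: "jbr w - jbr v \<le> vnorm (w - v)"
proof -
  have "((1::real), phi w) - (1, phi v) = (0, phi (w - v))" by (simp add: phi_diff)
  moreover have "norm ((1::real), phi w) - norm ((1::real), phi v) \<le> norm (((1::real), phi w) - (1, phi v))"
    by (rule norm_triangle_ineq2)
  ultimately show ?thesis by (simp add: jbr_phi vnorm_phi norm_prod_def)
qed

lemma vnorm_sym: "vnorm (w - v) = vnorm (v - w)"
  by (simp add: vnorm_phi phi_diff norm_minus_commute)

lemma jbr_mono: "vnorm v \<le> vnorm w \<Longrightarrow> jbr v \<le> jbr w"
  unfolding jbr_def using vnorm_phi by (simp add: power_mono)


context gctx begin

lemma part1:
  assumes a: "1 \<le> a" and b: "1 \<le> b" and c: "1 \<le> c" "c \<le> a + b" and lam: "0 \<le> lam"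
  shows "c ^ 3 * exp (lam * g c) \<le> 8 * (a ^ 3 * exp (lam * g a)) * (b ^ 3 * exp (lam * g b)) / (min a b) ^ 3"
proof -
  have "g c \<le> g (a + b)" using gmono[of c "a+b"] c by simp
  also have "\<dots> \<le> g a + g b" using gsub[of a b] a b by simp
  finally have "lam * g c \<le> lam * g a + lam * g b" using lam by (simp add: mult_left_mono distrib_left[symmetric])
  then have E: "exp (lam * g c) \<le> exp (lam * g a) * exp (lam * g b)" by (simp add: exp_add[symmetric])
  have P: "c ^ 3 \<le> 8 * (a ^ 3 * b ^ 3) / (min a b) ^ 3"
  proof (cases "a \<le> b")
    case True
    have "c ^ 3 \<le> (2 * b) ^ 3" using c True by (intro power_mono) auto
    also have "\<dots> = 8 * (a ^ 3 * b ^ 3) / (min a b) ^ 3" using True a by (simp add: min_def field_simps)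
    finally show ?thesis .
  next
    case False
    have "c ^ 3 \<le> (2 * a) ^ 3" using c False by (intro power_mono) auto
    also have "\<dots> = 8 * (a ^ 3 * b ^ 3) / (min a b) ^ 3" using False b by (simp add: min_def field_simps)
    finally show ?thesis .
  qed
  have "c ^ 3 * exp (lam * g c) \<le> (8 * (a ^ 3 * b ^ 3) / (min a b) ^ 3) * (exp (lam * g a) * exp (lam * g b))"
    using P E c a b by (intro mult_mono) auto
  also have "\<dots> = 8 * (a ^ 3 * exp (lam * g a)) * (b ^ 3 * exp (lam * g b)) / (min a b) ^ 3"
    by (simp add: field_simps)
  finally show ?thesis .
qed

lemma part2:
  assumes a: "1 \<le> a" and ab: "a \<le> b" "b - a \<le> a / 4" and d: "b - a \<le> d" "1 \<le> d" and lam: "0 \<le> lam"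
  shows "\<bar>b ^ 3 * exp (lam * g b) - a ^ 3 * exp (lam * g a)\<bar>
     \<le> 8 * (1 + lam * g a) / a * (a ^ 3 * exp (lam * g a)) * (d ^ 3 * exp (lam * g d)) / d ^ 2"
proof -
  define E where "E = exp (lam * g a)"
  define F where "F = exp (lam * g d)"
  define x where "x = lam * (g b - g a)"
  have Epos: "0 < E" "0 < F" by (auto simp: E_def F_def)
  have ga: "0 \<le> g a" using gnonneg[of a] a by simp
  have x0: "0 \<le> x" unfolding x_def using gincr(1)[of a b] a ab lam by simp
  have "g b \<le> g (a + (b - a))" by simp
  also have "\<dots> \<le> g a + g (b - a)" using gsub[of a "b-a"] a ab by simp
  also have "\<dots> \<le> g a + g d" using gmono[of "b-a" d] ab d by simp
  finally have "x \<le> lam * g d" unfolding x_def using lam by (simp add: mult_left_mono right_diff_distrib[symmetric])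
  then have xF: "exp x \<le> F" unfolding F_def by simp
  have gd': "0 \<le> g' a" using gder_nonneg[OF s0 s1 rho, of a] a by simp
  have "g b - g a \<le> (b - a) * g' a" using gincr(2)[of a b] a ab by simp
  also have "\<dots> \<le> d * g' a" using d gd' by (intro mult_right_mono) auto
  also have "\<dots> \<le> d * (g a / a)" using glow[of a] a d by (intro mult_left_mono) (auto simp: field_simps)
  finally have "x \<le> lam * (d * (g a / a))" unfolding x_def using lam by (intro mult_left_mono) auto
  then have x1: "a * x \<le> lam * g a * d" using a by (simp add: field_simps)
  have eb: "exp (lam * g b) = E * exp x" unfolding E_def x_def by (simp add: exp_add[symmetric] algebra_simps)
  have ex1: "exp x - 1 \<le> x * exp x"
  proof -
    have "1 + (- x) \<le> exp (- x)" by (rule exp_ge_add_one_self)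
    then have "(1 - x) * exp x \<le> exp (- x) * exp x" by (intro mult_right_mono) auto
    then show ?thesis by (simp add: exp_minus field_simps)
  qed
  have cub: "b ^ 3 - a ^ 3 \<le> 4 * a ^ 2 * d"
  proof -
    have "b ^ 3 - a ^ 3 = (b - a) * (b ^ 2 + a * b + a ^ 2)" by (simp add: algebra_simps power2_eq_square power3_eq_cube)
    also have "\<dots> \<le> d * (4 * a ^ 2)"
    proof (intro mult_mono)
      have "b \<le> 5 / 4 * a" using ab by simp
      then have h1: "b * b \<le> (5/4 * a) * (5/4 * a)" using a ab by (intro mult_mono) auto
      have h2: "a * b \<le> a * (5/4 * a)" using \<open>b \<le> 5 / 4 * a\<close> a by (intro mult_left_mono) auto
      have "(5/4 * a) * (5/4 * a) = 25/16 * (a * a)" "a * (5/4 * a) = 5/4 * (a * a)" by simp_all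
      moreover have "0 \<le> a * a" by simp
      ultimately show "b ^ 2 + a * b + a ^ 2 \<le> 4 * a ^ 2" using h1 h2 unfolding power2_eq_square by linarith
    qed (use d ab in auto)
    finally show ?thesis by (simp add: mult_ac)
  qed
  have diff: "b ^ 3 * exp (lam * g b) - a ^ 3 * exp (lam * g a) = (b ^ 3 - a ^ 3) * E * exp x + a ^ 3 * E * (exp x - 1)"
    unfolding eb E_def by (simp add: algebra_simps)
  have b3: "a ^ 3 \<le> b ^ 3" using a ab by (intro power_mono) auto
  have nn: "0 \<le> (b ^ 3 - a ^ 3) * E * exp x + a ^ 3 * E * (exp x - 1)"
    using b3 Epos x0 a by (intro add_nonneg_nonneg mult_nonneg_nonneg) auto
  have t1: "(b ^ 3 - a ^ 3) * E * exp x \<le> (4 * a ^ 2 * d) * E * F"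
    using cub b3 Epos xF d by (intro mult_mono) auto
  have "a ^ 3 * E * (exp x - 1) \<le> a ^ 3 * E * (x * exp x)"
    using ex1 Epos a by (intro mult_left_mono) auto
  also have "\<dots> = (a ^ 2 * E) * ((a * x) * exp x)" by (simp add: power2_eq_square power3_eq_cube)
  also have "\<dots> \<le> (a ^ 2 * E) * ((lam * g a * d) * F)"
  proof (rule mult_left_mono)
    show "a * x * exp x \<le> lam * g a * d * F"
      using x1 xF Epos x0 a lam ga d by (rule_tac mult_mono) auto
  qed (use Epos in auto)
  also have "\<dots> = a ^ 2 * E * (lam * g a * d) * F" by simp
  finally have t2: "a ^ 3 * E * (exp x - 1) \<le> a ^ 2 * E * (lam * g a * d) * F" .
  have "\<bar>b ^ 3 * exp (lam * g b) - a ^ 3 * exp (lam * g a)\<bar>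
      = (b ^ 3 - a ^ 3) * E * exp x + a ^ 3 * E * (exp x - 1)" using diff nn by simp
  also have "\<dots> \<le> (4 * a ^ 2 * d) * E * F + a ^ 2 * E * (lam * g a * d) * F" using t1 t2 by simp
  also have "\<dots> = a ^ 2 * d * E * F * (4 + lam * g a)" by (simp add: algebra_simps)
  also have "\<dots> \<le> a ^ 2 * d * E * F * (8 * (1 + lam * g a))"
    using Epos a d lam ga by (intro mult_left_mono) auto
  also have "\<dots> = 8 * (1 + lam * g a) / a * (a ^ 3 * E) * (d ^ 3 * F) / d ^ 2"
    using a d by (simp add: field_simps power2_eq_square power3_eq_cube)
  finally show ?thesis unfolding E_def F_def .
qed

end

theorem lemmaA3:
  "\<exists>C > 0. \<forall>(s::real) (\<rho>::real) (T::real) (lam::real \<Rightarrow> real) (t::real) (v::int \<times> real) (w::int \<times> real).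
      (s \<in> {1/4..3/4} \<and> \<rho> \<ge> 2 ^ 40 \<and> (\<forall>\<tau>\<in>{0..T}. lam \<tau> \<in> {0..1}) \<and> t \<in> {0..T}) \<longrightarrow>
        (Bw s \<rho> (lam t) (v + w)
          \<le> C * Bw s \<rho> (lam t) v * Bw s \<rho> (lam t) w / (min (jbr v) (jbr w)) ^ 3
      \<and> ((vnorm v \<le> vnorm w \<and> vnorm (w - v) \<le> vnorm v / 4) \<longrightarrow>
          \<bar>Bw s \<rho> (lam t) w - Bw s \<rho> (lam t) v\<bar>
            \<le> C * (1 + lam t * gfun s \<rho> (jbr v)) / jbr v * Bw s \<rho> (lam t) v
                * Bw s \<rho> (lam t) (v - w) / (jbr (v - w)) ^ 2))"
proof (intro exI[of _ 8] conjI allI impI)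
  fix s \<rho> T :: real and lam :: "real \<Rightarrow> real" and t :: real and v w :: "int \<times> real"
  assume H: "s \<in> {1/4..3/4} \<and> \<rho> \<ge> 2 ^ 40 \<and> (\<forall>\<tau>\<in>{0..T}. lam \<tau> \<in> {0..1}) \<and> t \<in> {0..T}"
  then interpret gctx s \<rho> by unfold_locales auto
  have lam: "0 \<le> lam t" using H by auto
  show "Bw s \<rho> (lam t) (v + w)
          \<le> 8 * Bw s \<rho> (lam t) v * Bw s \<rho> (lam t) w / (min (jbr v) (jbr w)) ^ 3"
    unfolding Bw_def
  proof (rule part1)
    show "jbr (v + w) \<le> jbr v + jbr w" using jbr_add[of v w] vnorm_le_jbr[of w] by linarith
  qed (use jbr_ge1 lam in auto)
next
  fix s \<rho> T :: real and lam :: "real \<Rightarrow> real" and t :: real and v w :: "int \<times> real"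
  assume H: "s \<in> {1/4..3/4} \<and> \<rho> \<ge> 2 ^ 40 \<and> (\<forall>\<tau>\<in>{0..T}. lam \<tau> \<in> {0..1}) \<and> t \<in> {0..T}"
    and V: "vnorm v \<le> vnorm w \<and> vnorm (w - v) \<le> vnorm v / 4"
  then interpret gctx s \<rho> by unfold_locales auto
  have lam: "0 \<le> lam t" using H by auto
  have ba: "jbr w - jbr v \<le> vnorm (w - v)" by (rule jbr_lip)
  show "\<bar>Bw s \<rho> (lam t) w - Bw s \<rho> (lam t) v\<bar>
            \<le> 8 * (1 + lam t * gfun s \<rho> (jbr v)) / jbr v * Bw s \<rho> (lam t) v
                * Bw s \<rho> (lam t) (v - w) / (jbr (v - w)) ^ 2"
    unfolding Bw_def
  proof (rule part2)
    show "jbr v \<le> jbr w" using V jbr_mono by blast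
    show "jbr w - jbr v \<le> jbr v / 4" using ba V vnorm_le_jbr[of v] by linarith
    show "jbr w - jbr v \<le> jbr (v - w)" using ba vnorm_sym[of w v] vnorm_le_jbr[of "v - w"] by linarith
  qed (use jbr_ge1 lam in auto)
qed simp

end
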